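(* Let $n \geq 2k \geq 4$. Suppose that $\mathcal F, \mathcal G \subset \binom{[n]}{k}$ are non-trivial, cross-intersecting, initial families. Then $$|\mathcal F| + |\mathcal G| \leq k+1 + \sum_{2 \leq i \leq k} \binom{k+1}{i}\binom{n-k-1}{k-i}.$$
   Context: $\binom{[n]}{k}$ is the collection of $k$-subsets of $[n]=\{1,\dots,n\}$. Families $\mathcal F,\mathcal G$ are cross-intersecting if $F\cap G\neq\emptyset$ for all $F\in\mathcal F$, $G\in\mathcal G$. A (non-empty) family is non-trivial if the intersection of all its members is empty. For $k$-sets $A=\{x_1<\dots<x_k\}$ and $B=\{y_1<\dots<y_k\}$ write $A \prec B$ if $x_i \leq y_i$ for all $1\le i\le k$. A family $\mathcal F\subset\binom{[n]}{k}$ is initial (shifted) if $A \prec B$ and $B\in\mathcal F$ imply $A \in \mathcal F$. *)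

theory Defs
  imports Main
begin

definition ksubsets :: "nat \<Rightarrow> nat \<Rightarrow> nat set set" where
  "ksubsets n k = {A. A \<subseteq> {1..n} \<and> card A = k}"

definition cross_intersecting :: "nat set set \<Rightarrow> nat set set \<Rightarrow> bool" where
  "cross_intersecting F G \<longleftrightarrow> (\<forall>A\<in>F. \<forall>B\<in>G. A \<inter> B \<noteq> {})"

definition nontrivial :: "nat set set \<Rightarrow> bool" where
  "nontrivial F \<longleftrightarrow> F \<noteq> {} \<and> \<Inter>F = {}"

definition shift_le :: "nat set \<Rightarrow> nat set \<Rightarrow> bool" where
  "shift_le A B \<longleftrightarrow> finite A \<and> finite B \<and> card A = card B \<and>
     (\<forall>i < card A. sorted_list_of_set A ! i \<le> sorted_list_of_set B ! i)"

definition initial :: "nat \<Rightarrow> nat \<Rightarrow> nat set set \<Rightarrow> bool" where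
  "initial n k F \<longleftrightarrow> F \<subseteq> ksubsets n k \<and>
     (\<forall>A\<in>ksubsets n k. \<forall>B\<in>F. shift_le A B \<longrightarrow> A \<in> F)"

end

theory Submission imports Defs begin

lemma shift_le_suff:
  assumes fA: "finite A" and fB: "finite B" and c: "card A = card B"
    and cnt: "\<And>m. card {b\<in>B. b \<le> m} \<le> card {a\<in>A. a \<le> m}"
  shows "shift_le A B"
  unfolding shift_le_def
proof (intro conjI allI impI)
  show "finite A" "finite B" "card A = card B" by fact+
  fix i assume i: "i < card A"
  define xs where "xs = sorted_list_of_set A"
  define ys where "ys = sorted_list_of_set B"
  have lx: "length xs = card A" and ly: "length ys = card A"
    using c by (simp_all add: xs_def ys_def)
  have sx: "sorted xs" and sy: "sorted ys" by (simp_all add: xs_def ys_def)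
  have dx: "distinct xs" and dy: "distinct ys" by (simp_all add: xs_def ys_def)
  have setx: "set xs = A" and sety: "set ys = B" using fA fB by (simp_all add: xs_def ys_def)
  show "sorted_list_of_set A ! i \<le> sorted_list_of_set B ! i"
  proof (rule ccontr)
    assume "\<not> ?thesis"
    hence lt: "ys ! i < xs ! i" by (simp add: xs_def ys_def)
    let ?b = "ys ! i"
    have "(!) ys ` {..i} \<subseteq> {b\<in>B. b \<le> ?b}"
    proof
      fix y assume "y \<in> (!) ys ` {..i}"
      then obtain j where j: "j \<le> i" "y = ys ! j" by auto
      have "ys ! j \<le> ys ! i" using sorted_nth_mono[OF sy j(1)] i ly by simp
      moreover have "ys ! j \<in> B" using j i ly sety by auto
      ultimately show "y \<in> {b\<in>B. b \<le> ?b}" using j by auto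
    qed
    moreover have "card ((!) ys ` {..i}) = Suc i"
    proof -
      have "inj_on ((!) ys) {..i}" using dy i ly
        by (auto simp: inj_on_def nth_eq_iff_index_eq)
      thus ?thesis by (simp add: card_image)
    qed
    ultimately have S1: "Suc i \<le> card {b\<in>B. b \<le> ?b}"
      using fB by (metis (no_types, lifting) card_mono finite_subset mem_Collect_eq subsetI)
    have "{a\<in>A. a \<le> ?b} \<subseteq> (!) xs ` {..<i}"
    proof
      fix a assume a: "a \<in> {a\<in>A. a \<le> ?b}"
      then obtain j where j: "j < length xs" "a = xs ! j" using setx by (auto simp: in_set_conv_nth)
      have "j < i"
      proof (rule ccontr)
        assume "\<not> j < i"
        hence "xs ! i \<le> xs ! j" using sorted_nth_mono[OF sx] j by simp
        thus False using a j lt by simp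
      qed
      thus "a \<in> (!) xs ` {..<i}" using j by auto
    qed
    hence "card {a\<in>A. a \<le> ?b} \<le> card ((!) xs ` {..<i})"
      by (intro card_mono) auto
    also have "\<dots> \<le> card {..<i}" by (rule card_image_le) simp
    finally have "card {a\<in>A. a \<le> ?b} \<le> i" by simp
    with S1 show False using cnt[of ?b] by simp
  qed
qed

lemma shift_le_nec:
  assumes "shift_le A B"
  shows "card {b\<in>B. b \<le> m} \<le> card {a\<in>A. a \<le> m}"
proof -
  have fA: "finite A" and fB: "finite B" and c: "card A = card B"
    and le: "\<And>i. i < card A \<Longrightarrow> sorted_list_of_set A ! i \<le> sorted_list_of_set B ! i"
    using assms by (auto simp: shift_le_def)
  define xs where "xs = sorted_list_of_set A"
  define ys where "ys = sorted_list_of_set B"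
  have lx: "length xs = card A" and ly: "length ys = card A"
    using c by (simp_all add: xs_def ys_def)
  have dx: "distinct xs" and dy: "distinct ys" by (simp_all add: xs_def ys_def)
  have setx: "set xs = A" and sety: "set ys = B" using fA fB by (simp_all add: xs_def ys_def)
  define J where "J = {j. j < card A \<and> ys ! j \<le> m}"
  have "{b\<in>B. b \<le> m} = (!) ys ` J"
    using sety ly by (auto simp: J_def in_set_conv_nth)
  moreover have "inj_on ((!) ys) J" using dy ly by (auto simp: J_def inj_on_def nth_eq_iff_index_eq)
  ultimately have 1: "card {b\<in>B. b \<le> m} = card J" by (simp add: card_image)
  have sub: "(!) xs ` J \<subseteq> {a\<in>A. a \<le> m}"
  proof
    fix a assume "a \<in> (!) xs ` J"
    then obtain j where j: "j < card A" "ys ! j \<le> m" "a = xs ! j" by (auto simp: J_def)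
    have "xs ! j \<in> A" using j(1) lx setx nth_mem by metis
    moreover have "xs ! j \<le> ys ! j" using le[OF j(1)] by (simp add: xs_def ys_def)
    ultimately show "a \<in> {a\<in>A. a \<le> m}" using j by simp
  qed
  have inj: "inj_on ((!) xs) J" using dx lx by (auto simp: J_def inj_on_def nth_eq_iff_index_eq)
  have "card ((!) xs ` J) \<le> card {a\<in>A. a \<le> m}"
    by (rule card_mono[OF _ sub]) (use fA in simp)
  moreover have "card ((!) xs ` J) = card J" using inj by (simp add: card_image)
  ultimately
  have "card J \<le> card {a\<in>A. a \<le> m}" by simp
  with 1 show ?thesis by simp
qed


lemma card_filter_insert:
  assumes "finite A" "N \<notin> A"
  shows "card {a\<in>insert N A. a \<le> m} = card {a\<in>A. a \<le> m} + (if N \<le> m then 1 else 0)"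
proof (cases "N \<le> m")
  case True
  hence "{a\<in>insert N A. a \<le> m} = insert N {a\<in>A. a \<le> m}" by auto
  thus ?thesis using assms True by simp
next
  case False
  hence "{a\<in>insert N A. a \<le> m} = {a\<in>A. a \<le> m}" by auto
  thus ?thesis using False by simp
qed

lemma shift_le_insert:
  assumes "shift_le A B" "N \<notin> A" "N \<notin> B"
  shows "shift_le (insert N A) (insert N B)"
proof -
  have fA: "finite A" and fB: "finite B" and c: "card A = card B"
    using assms by (auto simp: shift_le_def)
  show ?thesis
  proof (rule shift_le_suff)
    show "finite (insert N A)" "finite (insert N B)" using fA fB by auto
    show "card (insert N A) = card (insert N B)" using fA fB c assms by simp
    fix m
    show "card {b\<in>insert N B. b \<le> m} \<le> card {a\<in>insert N A. a \<le> m}"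
      using card_filter_insert[OF fA assms(2)] card_filter_insert[OF fB assms(3)]
        shift_le_nec[OF assms(1), of m] by simp
  qed
qed

lemma shift_le_swap:
  assumes fB: "finite B" and y: "y \<in> B" and x: "x \<notin> B" and xy: "x \<le> y"
  shows "shift_le (insert x (B - {y})) B"
proof (rule shift_le_suff)
  show "finite (insert x (B - {y}))" "finite B" using fB by auto
  show "card (insert x (B - {y})) = card B" using fB y x
    by (simp add: card_Diff_singleton) (metis Suc_pred card_gt_0_iff empty_iff)
  fix m
  show "card {b\<in>B. b \<le> m} \<le> card {a\<in>insert x (B - {y}). a \<le> m}"
  proof (cases "x \<le> m")
    case False
    hence "{a\<in>insert x (B - {y}). a \<le> m} = {b\<in>B. b \<le> m}" using xy y by auto
    thus ?thesis by simp
  next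
    case True
    have f: "finite {b\<in>B - {y}. b \<le> m}" using fB by simp
    have "{a\<in>insert x (B - {y}). a \<le> m} = insert x {b\<in>B - {y}. b \<le> m}" using True by auto
    hence e: "card {a\<in>insert x (B - {y}). a \<le> m} = Suc (card {b\<in>B - {y}. b \<le> m})"
      using x f by simp
    have "{b\<in>B. b \<le> m} \<subseteq> insert y {b\<in>B - {y}. b \<le> m}" by auto
    hence "card {b\<in>B. b \<le> m} \<le> card (insert y {b\<in>B - {y}. b \<le> m})"
      using f by (intro card_mono) auto
    also have "\<dots> \<le> Suc (card {b\<in>B - {y}. b \<le> m})" by (simp add: card_insert_if f)
    finally show ?thesis using e by simp
  qed
qed

lemma shift_le_interval:
  assumes A: "A \<subseteq> {1..n}" "1 \<notin> A" "card A = k"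
  shows "shift_le {2..k+1} A"
proof (rule shift_le_suff)
  have fA: "finite A" using A finite_subset by blast
  show "finite {2..k+1}" "finite A" using fA by auto
  show "card {2..k+1} = card A" using A by simp
  fix m
  show "card {b\<in>A. b \<le> m} \<le> card {a\<in>{2..k+1}. a \<le> m}"
  proof (cases "m \<le> k+1")
    case True
    have e: "{a\<in>{2..k+1}. a \<le> m} = {2..m}" using True by auto
    have s:  "{b\<in>A. b \<le> m} \<subseteq> {2..m}"
    proof
      fix b assume b: "b \<in> {b\<in>A. b \<le> m}"
      hence "b \<in> A" "b \<le> m" by auto
      moreover from this have "1 \<le> b" "b \<noteq> 1" using A by auto
      ultimately show "b \<in> {2..m}" by simp
    qed
    have "card {b\<in>A. b \<le> m} \<le> card {2..m}" by (rule card_mono[OF _ s]) simp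
    thus ?thesis unfolding e .
  next
    case False
    have "{a\<in>{2..k+1}. a \<le> m} = {2..k+1}" using False by auto
    moreover have "card {b\<in>A. b \<le> m} \<le> card A" using fA by (intro card_mono) auto
    ultimately show ?thesis using A by simp
  qed
qed


definition Tf :: "nat \<Rightarrow> nat \<Rightarrow> nat \<Rightarrow> nat set set" where
  "Tf N t s = {A \<in> ksubsets N t. 2 \<le> card (A \<inter> {1..s})}"

lemma finite_ksubsets: "finite (ksubsets N t)"
proof -
  have "ksubsets N t \<subseteq> Pow {1..N}" by (auto simp: ksubsets_def)
  thus ?thesis by (rule finite_subset) simp
qed

lemma ksubsets_finite_mem: "A \<in> ksubsets N t \<Longrightarrow> finite A"
  by (auto simp: ksubsets_def intro: finite_subset)

lemma split_card:
  assumes "F \<subseteq> ksubsets N t"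
  shows "card F = card {A\<in>F. N \<notin> A} + card ((\<lambda>A. A - {N}) ` {A\<in>F. N \<in> A})"
proof -
  have fF: "finite F" using assms finite_ksubsets finite_subset by blast
  have "F = {A\<in>F. N \<notin> A} \<union> {A\<in>F. N \<in> A}" by auto
  hence "card F = card {A\<in>F. N \<notin> A} + card {A\<in>F. N \<in> A}"
    using fF by (metis (no_types, lifting) card_Un_disjoint disjoint_iff finite_Un mem_Collect_eq)
  moreover have "inj_on (\<lambda>A. A - {N}) {A\<in>F. N \<in> A}"
    unfolding inj_on_def by (metis (no_types, lifting) insert_Diff mem_Collect_eq)
  ultimately show ?thesis by (simp add: card_image)
qed

lemma card_Tf:
  assumes sN: "s \<le> N"
  shows "card (Tf N t s) = (\<Sum>i\<in>{2..t}. (s choose i) * ((N - s) choose (t - i)))"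
proof -
  define P where "P i = {A \<in> ksubsets N t. card (A \<inter> {1..s}) = i}" for i
  have U: "Tf N t s = (\<Union>i\<in>{2..t}. P i)"
  proof
    show "Tf N t s \<subseteq> (\<Union>i\<in>{2..t}. P i)"
    proof
      fix A assume A: "A \<in> Tf N t s"
      hence fA: "finite A" "card A = t" by (auto simp: Tf_def ksubsets_def intro: finite_subset)
      have "card (A \<inter> {1..s}) \<le> t" using fA card_mono[of A "A \<inter> {1..s}"] by auto
      thus "A \<in> (\<Union>i\<in>{2..t}. P i)" using A by (auto simp: Tf_def P_def)
    qed
    show "(\<Union>i\<in>{2..t}. P i) \<subseteq> Tf N t s" by (auto simp: Tf_def P_def)
  qed
  have fP: "finite (P i)" for i
    using finite_ksubsets[of N t] by (rule finite_subset[rotated]) (auto simp: P_def)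
  have "card (Tf N t s) = (\<Sum>i\<in>{2..t}. card (P i))"
    unfolding U by (rule card_UN_disjoint) (use fP in \<open>auto simp: P_def\<close>)
  also have "\<dots> = (\<Sum>i\<in>{2..t}. (s choose i) * ((N - s) choose (t - i)))"
  proof (rule sum.cong[OF refl])
    fix i assume i: "i \<in> {2..t}"
    define X where "X = {X. X \<subseteq> {1..s} \<and> card X = i}"
    define Y where "Y = {Y. Y \<subseteq> {s+1..N} \<and> card Y = t - i}"
    define h where "h A = (A \<inter> {1..s}, A - {1..s})" for A :: "nat set"
    have "bij_betw h (P i) (X \<times> Y)"
      unfolding bij_betw_def
    proof
      show "inj_on h (P i)"
        by (auto simp: inj_on_def h_def)
      show "h ` P i = X \<times> Y"
      proof
        show "h ` P i \<subseteq> X \<times> Y"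
        proof
          fix p assume "p \<in> h ` P i"
          then obtain A where A: "A \<in> P i" "p = h A" by auto
          hence A1: "A \<subseteq> {1..N}" "card A = t" "card (A \<inter> {1..s}) = i" "finite A"
            by (auto simp: P_def ksubsets_def intro: finite_subset)
          have "card (A - {1..s}) = t - i" using A1 by (simp add: card_Diff_subset_Int)
          moreover have "A - {1..s} \<subseteq> {s+1..N}" using A1(1) by auto
          ultimately show "p \<in> X \<times> Y" using A A1 by (auto simp: h_def X_def Y_def)
        qed
        show "X \<times> Y \<subseteq> h ` P i"
        proof
          fix p assume "p \<in> X \<times> Y"
          then obtain U V where p: "p = (U, V)" "U \<subseteq> {1..s}" "card U = i" "V \<subseteq> {s+1..N}" "card V = t - i"
            by (auto simp: X_def Y_def)
          have fU: "finite U" "finite V" using p finite_subset by blast+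
          have uS: "\<forall>x\<in>U. 1 \<le> x \<and> x \<le> s" and vS: "\<forall>x\<in>V. s < x \<and> x \<le> N"
            using p(2,4) by auto
          have d: "U \<inter> V = {}" using uS vS by fastforce
          have "card (U \<union> V) = t" using fU d p i by (simp add: card_Un_disjoint)
          moreover have "U \<union> V \<subseteq> {1..N}" using uS vS sN by auto
          moreover have "(U \<union> V) \<inter> {1..s} = U" "(U \<union> V) - {1..s} = V" using uS vS by fastforce+
          ultimately have "U \<union> V \<in> P i" "h (U \<union> V) = p"
            using p by (auto simp: P_def ksubsets_def h_def)
          thus "p \<in> h ` P i" by (metis imageI)
        qed
      qed
    qed
    hence "card (P i) = card (X \<times> Y)" by (rule bij_betw_same_card)
    also have "\<dots> = card X * card Y" by (rule card_cartesian_product)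
    also have "card X = s choose i" unfolding X_def using n_subsets[of "{1..s}" i] by simp
    also have "card Y = (N - s) choose (t - i)" unfolding Y_def using n_subsets[of "{s+1..N}" "t - i"] by simp
    finally show "card (P i) = (s choose i) * ((N - s) choose (t - i))" .
  qed
  finally show ?thesis .
qed

lemma singleton_bound:
  assumes F: "F \<subseteq> ksubsets M 1" and G: "G \<subseteq> ksubsets M 1"
    and cr: "cross_intersecting F G" and M: "2 \<le> M"
  shows "card F + card G \<le> card (ksubsets M 1)"
proof -
  have fK: "finite (ksubsets M 1)" by (rule finite_ksubsets)
  show ?thesis
  proof (cases "F = {} \<or> G = {}")
    case True
    thus ?thesis using F G fK by (auto intro: card_mono)
  next
    case False
    then obtain A B where AB: "A \<in> F" "B \<in> G" by auto
    have eq: "A' = B'" if "A' \<in> F" "B' \<in> G" for A' B'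
    proof -
      have "card A' = 1" "card B' = 1" using that F G by (auto simp: ksubsets_def)
      then obtain a b where "A' = {a}" "B' = {b}" by (metis One_nat_def card_1_singleton_iff)
      moreover have "A' \<inter> B' \<noteq> {}" using cr that by (auto simp: cross_intersecting_def)
      ultimately show ?thesis by auto
    qed
    have "F \<subseteq> {B}" "G \<subseteq> {A}" using eq AB by auto
    hence "card F \<le> 1" "card G \<le> 1" by (auto dest: card_mono[rotated])
    moreover have "{{1},{2}} \<subseteq> ksubsets M (1::nat)" using M by (auto simp: ksubsets_def)
    hence "card {{1::nat},{2}} \<le> card (ksubsets M 1)" using fK by (rule card_mono[rotated])
    ultimately show ?thesis by simp
  qed
qed


lemma ksub_iff: "A \<in> ksubsets n k \<longleftrightarrow> A \<subseteq> {1..n} \<and> card A = k"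
  by (simp add: ksubsets_def)

lemma cross_sym: "cross_intersecting F G \<Longrightarrow> cross_intersecting G F"
  by (auto simp: cross_intersecting_def)

lemma L0:
  assumes "initial (Suc M) t F"
  shows "initial M t {A\<in>F. Suc M \<notin> A}"
  unfolding initial_def
proof (intro conjI ballI impI)
  have Fk: "F \<subseteq> ksubsets (Suc M) t" using assms by (simp add: initial_def)
  show "{A \<in> F. Suc M \<notin> A} \<subseteq> ksubsets M t"
  proof
    fix A assume A: "A \<in> {A \<in> F. Suc M \<notin> A}"
    hence "A \<in> ksubsets (Suc M) t" "Suc M \<notin> A" using Fk by blast+
    hence "A \<subseteq> {1..Suc M}" "card A = t" "Suc M \<notin> A" by (simp_all add: ksub_iff)
    hence "A \<subseteq> {1..M}" "card A = t" using le_Suc_eq by fastforce+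
    thus "A \<in> ksubsets M t" by (simp add: ksub_iff)
  qed
  fix A B assume A: "A \<in> ksubsets M t" and B: "B \<in> {A \<in> F. Suc M \<notin> A}" and sh: "shift_le A B"
  have "A \<in> ksubsets (Suc M) t" using A by (auto simp: ksub_iff)
  hence "A \<in> F" using assms B sh by (auto simp: initial_def)
  moreover have "Suc M \<notin> A" using A by (auto simp: ksub_iff)
  ultimately show "A \<in> {A \<in> F. Suc M \<notin> A}" by simp
qed

lemma L1:
  assumes "initial (Suc M) t F" "1 \<le> t"
  shows "initial M (t - 1) ((\<lambda>A. A - {Suc M}) ` {A\<in>F. Suc M \<in> A})"
  unfolding initial_def
proof (intro conjI ballI impI)
  have Fk: "F \<subseteq> ksubsets (Suc M) t" using assms by (simp add: initial_def)
  show "(\<lambda>A. A - {Suc M}) ` {A\<in>F. Suc M \<in> A} \<subseteq> ksubsets M (t - 1)"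
  proof
    fix A' assume "A' \<in> (\<lambda>A. A - {Suc M}) ` {A\<in>F. Suc M \<in> A}"
    then obtain A where A: "A \<in> F" "Suc M \<in> A" "A' = A - {Suc M}" by auto
    hence "A \<in> ksubsets (Suc M) t" using Fk by blast
    hence A1: "A \<subseteq> {1..Suc M}" "card A = t" by (simp_all add: ksub_iff)
    hence "finite A" using finite_subset by blast
    hence "card A' = t - 1" using A A1 by simp
    moreover have "A' \<subseteq> {1..M}" using A A1 le_Suc_eq by fastforce
    ultimately show "A' \<in> ksubsets M (t - 1)" by (simp add: ksub_iff)
  qed
  fix A' B' assume A': "A' \<in> ksubsets M (t - 1)"
    and B': "B' \<in> (\<lambda>A. A - {Suc M}) ` {A\<in>F. Suc M \<in> A}" and sh: "shift_le A' B'"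
  then obtain B where B: "B \<in> F" "Suc M \<in> B" "B' = B - {Suc M}" by auto
  have nA: "Suc M \<notin> A'" using A' by (auto simp: ksub_iff)
  have fA: "finite A'" using A' by (auto simp: ksub_iff intro: finite_subset)
  have "shift_le (insert (Suc M) A') (insert (Suc M) B')"
    by (rule shift_le_insert[OF sh nA]) (simp add: B)
  moreover have "insert (Suc M) B' = B" using B by auto
  moreover have "insert (Suc M) A' \<in> ksubsets (Suc M) t"
    using A' fA nA assms(2) by (auto simp: ksub_iff)
  ultimately have "insert (Suc M) A' \<in> F" using assms(1) B by (auto simp: initial_def)
  moreover have "A' = insert (Suc M) A' - {Suc M}" using nA by simp
  ultimately show "A' \<in> (\<lambda>A. A - {Suc M}) ` {A\<in>F. Suc M \<in> A}" by blast
qed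

lemma LC:
  assumes iF: "initial (Suc M) t F" and iG: "initial (Suc M) t G"
    and cr: "cross_intersecting F G" and tM: "2 * t \<le> M" and t1: "1 \<le> t"
  shows "cross_intersecting ((\<lambda>A. A - {Suc M}) ` {A\<in>F. Suc M \<in> A}) ((\<lambda>A. A - {Suc M}) ` {A\<in>G. Suc M \<in> A})"
  unfolding cross_intersecting_def
proof (intro ballI notI)
  fix A' B' assume "A' \<in> (\<lambda>A. A - {Suc M}) ` {A\<in>F. Suc M \<in> A}" "B' \<in> (\<lambda>A. A - {Suc M}) ` {A\<in>G. Suc M \<in> A}"
    and d: "A' \<inter> B' = {}"
  then obtain A B where A: "A \<in> F" "Suc M \<in> A" "A' = A - {Suc M}" and B: "B \<in> G" "Suc M \<in> B" "B' = B - {Suc M}"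
    by auto
  have "A \<in> ksubsets (Suc M) t" "B \<in> ksubsets (Suc M) t" using A B iF iG by (auto simp: initial_def)
  hence A1: "A \<subseteq> {1..Suc M}" "card A = t" and B1: "B \<subseteq> {1..Suc M}" "card B = t"
    by (simp_all add: ksub_iff)
  have fA: "finite A" "finite B" using A1 B1 finite_subset by blast+
  have cA': "card A' = t - 1" "card B' = t - 1" using A B A1 B1 fA by auto
  have "card (A' \<union> B') \<le> card A' + card B'" by (rule card_Un_le)
  hence cU: "card (A' \<union> B') < M" using cA' tM t1 by simp
  have "\<not> {1..M} \<subseteq> A' \<union> B'"
  proof
    assume "{1..M} \<subseteq> A' \<union> B'"
    hence "card {1..M} \<le> card (A' \<union> B')" using fA A B by (intro card_mono) auto
    thus False using cU by simp
  qed
  then obtain x where x: "x \<in> {1..M}" "x \<notin> A' \<union> B'" by blast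
  hence x: "x \<in> {1..M}" "x \<notin> A'" "x \<notin> B'" by auto
  have xA: "x \<notin> A" "x \<notin> B" using x A B by auto
  define A'' where "A'' = insert x (A - {Suc M})"
  have "shift_le A'' A" unfolding A''_def
    by (rule shift_le_swap[OF fA(1) A(2) xA(1)]) (use x in simp)
  moreover have "A'' \<in> ksubsets (Suc M) t"
  proof -
    have "card A'' = t" using xA fA A A1 t1 by (simp add: A''_def)
    moreover have "A'' \<subseteq> {1..Suc M}" using A1 x by (auto simp: A''_def)
    ultimately show ?thesis by (simp add: ksub_iff)
  qed
  ultimately have "A'' \<in> F" using iF A by (auto simp: initial_def)
  hence "A'' \<inter> B \<noteq> {}" using cr B by (auto simp: cross_intersecting_def)
  moreover have "A'' \<inter> B = {}" using d xA A B by (auto simp: A''_def)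
  ultimately show False by simp
qed

lemma Tf_empty: "t \<le> 1 \<Longrightarrow> Tf N t s = {}"
proof -
  assume t: "t \<le> 1"
  { fix A assume A: "A \<in> Tf N t s"
    hence "finite A" "card A = t" "2 \<le> card (A \<inter> {1..s})"
      by (auto simp: Tf_def ksub_iff intro: finite_subset)
    moreover have "card (A \<inter> {1..s}) \<le> card A" using \<open>finite A\<close> by (intro card_mono) auto
    ultimately have False using t by simp }
  thus ?thesis by auto
qed

lemma finite_Tf: "finite (Tf N t s)"
  using finite_ksubsets by (rule finite_subset[rotated]) (auto simp: Tf_def)


lemma gen_base:
  assumes N: "N = 2 * t" and t2: "2 \<le> t" and ts: "t + 1 \<le> s"
    and cr: "cross_intersecting F G" and FT: "F \<subseteq> Tf N t s" and GT: "G \<subseteq> Tf N t s"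
  shows "card F + card G \<le> card (Tf N t s) + (if t + 1 = s then s else 0)"
proof -
  define S where "S = (if t + 1 = s then {A. A \<subseteq> {1..s} \<and> card A = t} else {})"
  have cS: "card S \<le> (if t + 1 = s then s else 0)"
  proof (cases "t + 1 = s")
    case True
    hence "card S = s choose t" using n_subsets[of "{1..s}" t] by (simp add: S_def)
    also have "\<dots> = s" using True binomial_Suc_n[of t] by simp
    finally show ?thesis using True by simp
  qed (simp add: S_def)
  have fS: "finite S" using cS by (cases "t + 1 = s") (auto simp: S_def intro: card_ge_0_finite)
  define c where "c A = {1..N} - A" for A :: "nat set"
  have fT: "finite (Tf N t s)" by (rule finite_Tf)
  have key: "c A \<in> Tf N t s - G" if A: "A \<in> F - S" for A
  proof -
    have "A \<in> Tf N t s" using A FT by blast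
    hence A1: "A \<subseteq> {1..N}" "card A = t" by (simp_all add: Tf_def ksub_iff)
    have fA: "finite A" using A1 finite_subset by blast
    have cc: "card (c A) = t" using A1 fA N by (simp add: c_def card_Diff_subset)
    have cN: "c A \<subseteq> {1..N}" by (auto simp: c_def)
    define I where "I = {1..N} \<inter> {1..s}"
    have e: "c A \<inter> {1..s} = I - (A \<inter> {1..s})" by (auto simp: c_def I_def)
    have sub: "A \<inter> {1..s} \<subseteq> I" using A1 by (auto simp: I_def)
    have ce: "card (c A \<inter> {1..s}) = card I - card (A \<inter> {1..s})"
      unfolding e using sub fA by (simp add: card_Diff_subset)
    have cAs: "card (A \<inter> {1..s}) \<le> t" using fA A1 card_mono[of A "A \<inter> {1..s}"] by auto
    have "2 \<le> card (c A \<inter> {1..s})"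
    proof (cases "s \<le> N")
      case True
      hence I: "I = {1..s}" by (auto simp: I_def)
      have "card (A \<inter> {1..s}) \<noteq> t \<or> t + 1 \<noteq> s"
      proof (rule ccontr)
        assume "\<not> ?thesis"
        hence h: "card (A \<inter> {1..s}) = card A" "t + 1 = s" using A1 by auto
        have "A \<inter> {1..s} = A" by (rule card_subset_eq[OF fA _ h(1)]) auto
        hence "A \<subseteq> {1..s}" by auto
        hence "A \<in> S" using h A1 by (simp add: S_def)
        thus False using A by simp
      qed
      hence "card (A \<inter> {1..s}) + 2 \<le> s" using cAs ts by auto
      thus ?thesis using ce I by simp
    next
      case False
      hence I: "I = {1..N}" by (auto simp: I_def)
      thus ?thesis using ce cAs N t2 by simp
    qed
    hence "c A \<in> Tf N t s" using cc cN by (simp add: Tf_def ksub_iff)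
    moreover have "c A \<notin> G"
    proof
      assume "c A \<in> G"
      hence "A \<inter> c A \<noteq> {}" using cr A by (auto simp: cross_intersecting_def)
      thus False by (auto simp: c_def)
    qed
    ultimately show ?thesis by simp
  qed
  have inj: "inj_on c (F - S)"
  proof (rule inj_onI)
    fix A B assume AB: "A \<in> F - S" "B \<in> F - S" "c A = c B"
    have "A \<subseteq> {1..N}" "B \<subseteq> {1..N}" using AB FT by (auto simp: Tf_def ksub_iff)
    thus "A = B" using AB(3) unfolding c_def by (metis double_diff order_refl)
  qed
  have "card (F - S) = card (c ` (F - S))" using inj by (simp add: card_image)
  also have "\<dots> \<le> card (Tf N t s - G)" using key fT by (intro card_mono) auto
  also have "\<dots> = card (Tf N t s) - card G" using GT fT by (simp add: card_Diff_subset finite_subset)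
  finally have 1: "card (F - S) \<le> card (Tf N t s) - card G" .
  have 2: "card G \<le> card (Tf N t s)" using GT fT by (rule card_mono[rotated])
  have "F \<subseteq> (F - S) \<union> S" by auto
  hence "card F \<le> card ((F - S) \<union> S)" using fS FT fT by (intro card_mono) (auto intro: finite_subset)
  also have "\<dots> \<le> card (F - S) + card S" by (rule card_Un_le)
  finally have 3: "card F \<le> card (F - S) + card S" .
  show ?thesis using 1 2 3 cS by linarith
qed

lemma gen:
  assumes "2 * t \<le> N" "t + 1 \<le> s" "initial N t F" "initial N t G" "cross_intersecting F G"
    "F \<subseteq> Tf N t s" "G \<subseteq> Tf N t s"
  shows "card F + card G \<le> card (Tf N t s) + (if t + 1 = s then s else 0)"
  using assms
proof (induction N arbitrary: t F G)
  case 0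
  hence "t = 0" by simp
  hence "F = {}" "G = {}" using 0 Tf_empty[of t 0 s] by auto
  thus ?case by simp
next
  case (Suc M)
  show ?case
  proof (cases "t \<le> 1")
    case True
    hence "F = {}" "G = {}" using Suc.prems Tf_empty[of t "Suc M" s] by auto
    thus ?thesis by simp
  next
    case t2: False
    show ?thesis
    proof (cases "Suc M = 2 * t")
      case True
      thus ?thesis using gen_base[OF True _ Suc.prems(2) Suc.prems(5-7)] t2 by simp
    next
      case False
      hence tM: "2 * t \<le> M" using Suc.prems(1) by simp
      define N where "N = Suc M"
      define sl where "sl = (if t + 1 = s then s else 0)"
      define F0 where "F0 = {A\<in>F. N \<notin> A}"
      define G0 where "G0 = {A\<in>G. N \<notin> A}"
      define T0 where "T0 = {A\<in>Tf N t s. N \<notin> A}"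
      define F1 where "F1 = (\<lambda>A. A - {N}) ` {A\<in>F. N \<in> A}"
      define G1 where "G1 = (\<lambda>A. A - {N}) ` {A\<in>G. N \<in> A}"
      define T1 where "T1 = (\<lambda>A. A - {N}) ` {A\<in>Tf N t s. N \<in> A}"
      have Fk: "F \<subseteq> ksubsets N t" "G \<subseteq> ksubsets N t" "Tf N t s \<subseteq> ksubsets N t"
        using Suc.prems by (auto simp: initial_def N_def Tf_def)
      have cF: "card F = card F0 + card F1" unfolding F0_def F1_def by (rule split_card[OF Fk(1)])
      have cG: "card G = card G0 + card G1" unfolding G0_def G1_def by (rule split_card[OF Fk(2)])
      have cT: "card (Tf N t s) = card T0 + card T1" unfolding T0_def T1_def by (rule split_card[OF Fk(3)])
      have T0e: "T0 = Tf M t s"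
      proof
        show "T0 \<subseteq> Tf M t s"
        proof
          fix A assume "A \<in> T0"
          hence "A \<subseteq> {1..Suc M}" "N \<notin> A" "card A = t" "2 \<le> card (A \<inter> {1..s})"
            by (auto simp: T0_def Tf_def ksub_iff N_def)
          moreover hence "A \<subseteq> {1..M}" using le_Suc_eq unfolding N_def by fastforce
          ultimately show "A \<in> Tf M t s" by (simp add: Tf_def ksub_iff)
        qed
        show "Tf M t s \<subseteq> T0" by (auto simp: T0_def Tf_def ksub_iff N_def)
      qed
      have IH0: "card F0 + card G0 \<le> card T0 + sl"
        unfolding T0e sl_def F0_def G0_def N_def
      proof (rule Suc.IH[OF tM Suc.prems(2)])
        show "initial M t {A \<in> F. Suc M \<notin> A}" "initial M t {A \<in> G. Suc M \<notin> A}"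
          using L0 Suc.prems(3,4) by blast+
        show "cross_intersecting {A \<in> F. Suc M \<notin> A} {A \<in> G. Suc M \<notin> A}"
          using Suc.prems(5) by (auto simp: cross_intersecting_def)
        show "{A \<in> F. Suc M \<notin> A} \<subseteq> Tf M t s" "{A \<in> G. Suc M \<notin> A} \<subseteq> Tf M t s"
          using Suc.prems(6,7) T0e by (auto simp: T0_def N_def)
      qed
      have iF1: "initial M (t - 1) F1" "initial M (t - 1) G1"
        unfolding F1_def G1_def N_def using L1 Suc.prems(3,4) t2 by auto
      have cr1: "cross_intersecting F1 G1"
        unfolding F1_def G1_def N_def by (rule LC[OF Suc.prems(3,4,5) tM]) (use t2 in simp)
      have F1T: "F1 \<subseteq> T1" "G1 \<subseteq> T1" unfolding F1_def G1_def T1_def N_def using Suc.prems(6,7) by blast+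
      have fT1: "finite T1" unfolding T1_def using finite_Tf by simp
      have supT1: "Tf M (t - 1) s \<subseteq> T1"
      proof
        fix A' assume A': "A' \<in> Tf M (t - 1) s"
        hence A1: "A' \<subseteq> {1..M}" "card A' = t - 1" "2 \<le> card (A' \<inter> {1..s})"
          by (auto simp: Tf_def ksub_iff)
        have fA: "finite A'" using A1 finite_subset by blast
        have nA: "N \<notin> A'" using A1 by (auto simp: N_def)
        have "card (A' \<inter> {1..s}) \<le> card (insert N A' \<inter> {1..s})" using fA by (intro card_mono) auto
        hence "insert N A' \<in> Tf N t s" using A1 fA nA t2 by (auto simp: Tf_def ksub_iff N_def)
        moreover have "A' = insert N A' - {N}" using nA by simp
        ultimately show "A' \<in> T1" unfolding T1_def by blast
      qed
      have b1: "card F1 + card G1 \<le> card T1"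
      proof (cases "s < N \<or> 3 \<le> t")
        case True
        have subT1: "T1 \<subseteq> Tf M (t - 1) s"
        proof
          fix A' assume "A' \<in> T1"
          then obtain A where A: "A \<in> Tf N t s" "N \<in> A" "A' = A - {N}" by (auto simp: T1_def)
          hence A1: "A \<subseteq> {1..N}" "card A = t" "2 \<le> card (A \<inter> {1..s})"
            by (auto simp: Tf_def ksub_iff)
          have fA: "finite A" using A1 finite_subset by blast
          have "A' \<in> ksubsets M (t - 1)"
            using A A1 fA le_Suc_eq unfolding N_def by (fastforce simp: ksub_iff)
          moreover have "2 \<le> card (A' \<inter> {1..s})"
          proof (cases "s < N")
            case True
            hence "A' \<inter> {1..s} = A \<inter> {1..s}" using A by auto
            thus ?thesis using A1 by simp
          next
            case False
            hence "3 \<le> t" "A' \<inter> {1..s} = A'" using \<open>s < N \<or> 3 \<le> t\<close> A A1 by auto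
            thus ?thesis using A A1 fA by simp
          qed
          ultimately show "A' \<in> Tf M (t - 1) s" by (simp add: Tf_def)
        qed
        have "card F1 + card G1 \<le> card (Tf M (t - 1) s) + (if t - 1 + 1 = s then s else 0)"
          by (rule Suc.IH) (use tM Suc.prems(2) iF1 cr1 F1T subT1 in auto)
        also have "(if t - 1 + 1 = s then s else 0) = 0" using Suc.prems(2) t2 by simp
        also have "card (Tf M (t - 1) s) \<le> card T1" using supT1 fT1 by (rule card_mono[rotated])
        finally show ?thesis by simp
      next
        case False
        hence t2': "t = 2" "N \<le> s" using t2 by auto
        have "F1 \<subseteq> ksubsets M 1" "G1 \<subseteq> ksubsets M 1" using iF1 t2' by (auto simp: initial_def)
        hence "card F1 + card G1 \<le> card (ksubsets M 1)"
          by (rule singleton_bound[OF _ _ cr1]) (use tM t2' in simp)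
        also have "ksubsets M 1 \<subseteq> T1"
        proof
          fix A' assume A': "A' \<in> ksubsets M 1"
          then obtain a where a: "A' = {a}" "1 \<le> a" "a \<le> M"
            by (auto simp: ksub_iff card_1_singleton_iff)
          have "a \<noteq> N" using a by (simp add: N_def)
          hence "{a, N} \<in> Tf N t s" using a t2' by (auto simp: Tf_def ksub_iff N_def Int_absorb2)
          moreover have "A' = {a, N} - {N}" using a \<open>a \<noteq> N\<close> by auto
          ultimately show "A' \<in> T1" unfolding T1_def by blast
        qed
        hence "card (ksubsets M 1) \<le> card T1" using fT1 by (rule card_mono[rotated])
        finally show ?thesis .
      qed
      show ?thesis unfolding N_def[symmetric] sl_def[symmetric]
        using cF cG cT IH0 b1 by linarith
    qed
  qed
qed


lemma interval_mem:
  assumes iH: "initial n k H" and nt: "nontrivial H" and kn: "k + 1 \<le> n"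
  shows "{2..k+1} \<in> H"
proof -
  have "1 \<notin> \<Inter>H" using nt by (simp add: nontrivial_def)
  then obtain A where A: "A \<in> H" "1 \<notin> A" by blast
  have "A \<in> ksubsets n k" using A iH by (auto simp: initial_def)
  hence A1: "A \<subseteq> {1..n}" "card A = k" by (simp_all add: ksub_iff)
  have "shift_le {2..k+1} A" by (rule shift_le_interval[OF A1(1) A(2) A1(2)])
  moreover have "{2..k+1} \<in> ksubsets n k" using kn by (auto simp: ksub_iff)
  ultimately show ?thesis using iH A by (auto simp: initial_def)
qed

lemma inT:
  assumes iG: "initial n k G" and cr: "cross_intersecting F G" and I: "{2..k+1} \<in> F"
    and k2: "2 \<le> k" and kn: "k + 1 \<le> n"
  shows "G \<subseteq> Tf n k (k+1)"
proof
  fix B assume B: "B \<in> G"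
  have "B \<in> ksubsets n k" using B iG by (auto simp: initial_def)
  hence B1: "B \<subseteq> {1..n}" "card B = k" by (simp_all add: ksub_iff)
  have fB: "finite B" using B1 finite_subset by blast
  have fBs: "finite (B \<inter> {1..k+1})" using fB by simp
  have two: "2 \<le> card (B \<inter> {1..k+1})" if "a \<in> B \<inter> {1..k+1}" "b \<in> B \<inter> {1..k+1}" "a \<noteq> b" for a b
  proof -
    have "card {a, b} \<le> card (B \<inter> {1..k+1})" using that fBs by (intro card_mono) auto
    thus ?thesis using that by simp
  qed
  have "{2..k+1} \<inter> B \<noteq> {}" using cr I B by (auto simp: cross_intersecting_def)
  then obtain j where j: "j \<in> B" "2 \<le> j" "j \<le> k + 1" by auto
  have "2 \<le> card (B \<inter> {1..k+1})"
  proof (cases "1 \<in> B")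
    case True
    thus ?thesis using two[of 1 j] j by auto
  next
    case False
    define B' where "B' = insert 1 (B - {j})"
    have "shift_le B' B" unfolding B'_def by (rule shift_le_swap[OF fB j(1) False]) (use j in simp)
    moreover have "B' \<in> ksubsets n k"
    proof -
      have "card B' = k" using fB j False B1 k2 by (simp add: B'_def)
      moreover have "B' \<subseteq> {1..n}" using B1 kn by (auto simp: B'_def)
      ultimately show ?thesis by (simp add: ksub_iff)
    qed
    ultimately have "B' \<in> G" using iG B by (auto simp: initial_def)
    hence "{2..k+1} \<inter> B' \<noteq> {}" using cr I by (auto simp: cross_intersecting_def)
    then obtain y where y: "y \<in> B'" "2 \<le> y" "y \<le> k + 1" by auto
    hence "y \<in> B" "y \<noteq> j" by (auto simp: B'_def)
    thus ?thesis using two[of y j] j y by auto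
  qed
  thus "B \<in> Tf n k (k+1)" using B1 by (simp add: Tf_def ksub_iff)
qed

theorem theorem1p6:
  fixes n k :: nat and F G :: "nat set set"
  assumes "4 \<le> 2 * k" and "2 * k \<le> n"
    and "F \<subseteq> ksubsets n k" and "G \<subseteq> ksubsets n k"
    and "nontrivial F" and "nontrivial G"
    and "cross_intersecting F G"
    and "initial n k F" and "initial n k G"
  shows "card F + card G \<le> k + 1 + (\<Sum>i\<in>{2..k}. ((k + 1) choose i) * ((n - k - 1) choose (k - i)))"
proof -
  have k2: "2 \<le> k" and kn: "k + 1 \<le> n" using assms(1,2) by auto
  have IF: "{2..k+1} \<in> F" by (rule interval_mem[OF assms(8,5) kn])
  have IG: "{2..k+1} \<in> G" by (rule interval_mem[OF assms(9,6) kn])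
  have GT: "G \<subseteq> Tf n k (k+1)" by (rule inT[OF assms(9,7) IF k2 kn])
  have FT: "F \<subseteq> Tf n k (k+1)" by (rule inT[OF assms(8) cross_sym[OF assms(7)] IG k2 kn])
  have "card F + card G \<le> card (Tf n k (k+1)) + (if k + 1 = k + 1 then k + 1 else 0)"
    by (rule gen[OF assms(2) _ assms(8,9,7) FT GT]) simp
  also have "card (Tf n k (k+1)) = (\<Sum>i\<in>{2..k}. ((k + 1) choose i) * ((n - (k + 1)) choose (k - i)))"
    by (rule card_Tf[OF kn])
  finally show ?thesis by simp
qed

end
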